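(* Let $K\subset\mathbb R$ be bounded and $T:K\to K$. If there exists a $T^{\mathbb N}$ interval of positive length, then there exist a subinterval $I\subset K$ of positive length and $n\in\mathbb N$ such that $T^nx=x$ for all $x\in I$.
   Context: An interval is a bounded nonempty connected subset of $\mathbb R$. A subinterval $I\subset K$ is a $T^m$ interval if $T^mx-x$ is constant for $x\in I$ ($T^m$ the $m$-fold composition); it is a $T^{\mathbb N}$ interval if it is a $T^m$ interval for every $m\in\mathbb N$. *)

theory Defs
  imports "HOL-Analysis.Analysis"
begin

definition real_interval :: "real set \<Rightarrow> bool" where
  "real_interval I \<longleftrightarrow> bounded I \<and> I \<noteq> {} \<and> connected I"

definition interval_length :: "real set \<Rightarrow> real" where
  "interval_length I = Sup I - Inf I"

definition Tm_interval :: "(real \<Rightarrow> real) \<Rightarrow> real set \<Rightarrow> nat \<Rightarrow> real set \<Rightarrow> bool" where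
  "Tm_interval T K m I \<longleftrightarrow>
     real_interval I \<and> I \<subseteq> K \<and> (\<exists>c. \<forall>x\<in>I. (T ^^ m) x - x = c)"

definition TN_interval :: "(real \<Rightarrow> real) \<Rightarrow> real set \<Rightarrow> real set \<Rightarrow> bool" where
  "TN_interval T K I \<longleftrightarrow> (\<forall>m::nat. m \<ge> 1 \<longrightarrow> Tm_interval T K m I)"

end

theory Submission
  imports Defs
begin

lemma floor_close:
  fixes a b L :: real
  assumes "L > 0" "floor (a / L) = floor (b / L)"
  shows "\<bar>b - a\<bar> < L"
proof -
  have f1: "real_of_int (floor (a / L)) \<le> a / L" "a / L < real_of_int (floor (a / L)) + 1"
    by (rule of_int_floor_le, rule real_of_int_floor_add_one_gt)
  have f2: "real_of_int (floor (b / L)) \<le> b / L" "b / L < real_of_int (floor (b / L)) + 1"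
    by (rule of_int_floor_le, rule real_of_int_floor_add_one_gt)
  have "b / L - a / L < 1" "a / L - b / L < 1" using f1 f2 assms(2) by linarith+
  hence "(b - a) / L < 1" "(a - b) / L < 1" by (simp_all only: diff_divide_distrib)
  hence "b - a < L" "a - b < L" using assms(1) by (simp_all only: divide_less_eq_1_pos)
  thus ?thesis by linarith
qed

lemma Ioo_sub:
  fixes J :: "real set"
  assumes "real_interval J"
  shows "{Inf J<..<Sup J} \<subseteq> J"
proof
  fix z assume z: "z \<in> {Inf J<..<Sup J}"
  have ne: "J \<noteq> {}" and bd: "bounded J" and cn: "connected J"
    using assms unfolding real_interval_def by auto
  have "bdd_below J" "bdd_above J" using bd by (auto simp: bounded_imp_bdd_below bounded_imp_bdd_above)
  obtain x where x: "x \<in> J" "x < z" using z ne \<open>bdd_below J\<close> by (meson cInf_less_iff greaterThanLessThan_iff)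
  obtain y where y: "y \<in> J" "z < y" using z ne \<open>bdd_above J\<close> by (meson less_cSup_iff greaterThanLessThan_iff)
  show "z \<in> J" using connectedD_interval[OF cn x(1) y(1)] x(2) y(2) by simp
qed

theorem theorem2p5:
  fixes K :: "real set" and T :: "real \<Rightarrow> real"
  assumes "bounded K"
    and "T ` K \<subseteq> K"
    and "\<exists>J. TN_interval T K J \<and> interval_length J > 0"
  shows "\<exists>I n. real_interval I \<and> I \<subseteq> K \<and> interval_length I > 0 \<and> n \<ge> 1 \<and>
               (\<forall>x\<in>I. (T ^^ n) x = x)"
proof -
  obtain J where TN: "TN_interval T K J" and Lp: "interval_length J > 0" using assms(3) by blast
  define L where "L = Sup J - Inf J"
  have L: "L > 0" using Lp by (simp add: interval_length_def L_def)
  have RJ: "real_interval J" and JK: "J \<subseteq> K"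
    using TN unfolding TN_interval_def Tm_interval_def by auto
  obtain x0 where x0: "x0 \<in> J" using RJ unfolding real_interval_def by auto
  define c where "c m = (T ^^ m) x0 - x0" for m
  have hc: "(T ^^ m) y = y + c m" if "y \<in> J" for m y
  proof (cases "m = 0")
    case True thus ?thesis by (simp add: c_def)
  next
    case False
    hence "m \<ge> 1" by simp
    then obtain d where "\<forall>x\<in>J. (T ^^ m) x - x = d"
      using TN unfolding TN_interval_def Tm_interval_def by blast
    hence "(T ^^ m) y - y = d" "(T ^^ m) x0 - x0 = d" using that x0 by auto
    thus ?thesis unfolding c_def by linarith
  qed
  have TK: "(T ^^ m) x \<in> K" if "x \<in> K" for m x
    using that assms(2) by (induction m) auto
  obtain B where B: "\<forall>x\<in>K. \<bar>x\<bar> \<le> B" using assms(1) by (auto simp: bounded_iff)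
  have cB: "\<bar>c m\<bar> \<le> 2 * B" for m
  proof -
    have "\<bar>(T ^^ m) x0\<bar> \<le> B" "\<bar>x0\<bar> \<le> B" using B TK x0 JK by auto
    thus ?thesis by (simp add: c_def)
  qed
  define f where "f m = floor (c m / L)" for m
  define N where "N = ceiling (2 * B / L) + 1"
  have "f m \<in> {-N..N}" for m
  proof -
    have "c m \<le> 2*B" "-(2*B) \<le> c m" using cB[of m] by linarith+
    hence h: "c m / L \<le> 2*B/L" "-(2*B)/L \<le> c m / L"
      using L divide_right_mono[of "c m" "2*B" L] divide_right_mono[of "-(2*B)" "c m" L] by auto
    have a: "real_of_int (f m) \<le> c m / L" "c m / L < real_of_int (f m) + 1"
      unfolding f_def by (rule of_int_floor_le, rule real_of_int_floor_add_one_gt)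
    have b: "2*B/L \<le> real_of_int (ceiling (2*B/L))" by (rule le_of_int_ceiling)
    have "real_of_int (f m) < real_of_int (N + 1)" "real_of_int (- N - 1) < real_of_int (f m)"
    proof -
      have e: "real_of_int (N+1) = real_of_int (ceiling (2*B/L)) + 2"
        "real_of_int (-N-1) = - real_of_int (ceiling (2*B/L)) - 2" by (simp_all add: N_def)
      show "real_of_int (f m) < real_of_int (N + 1)" using a b h e by linarith
      show "real_of_int (- N - 1) < real_of_int (f m)" using a b h e by linarith
    qed
    hence "f m < N + 1" "- N - 1 < f m" by (simp_all only: of_int_less_iff)
    thus ?thesis by simp
  qed
  hence "finite (range f)" by (meson finite_atLeastAtMost_int finite_subset image_subsetI)
  hence "\<not> inj f" using finite_imageD infinite_UNIV_nat by blast
  then obtain i j where ij0: "i \<noteq> j" "f i = f j" unfolding inj_def by blast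
  have fe: "floor (c i / L) = floor (c j / L)" using ij0(2) unfolding f_def .
  have c1: "\<bar>c j - c i\<bar> < L" by (rule floor_close[OF L fe])
  have c2: "\<bar>c i - c j\<bar> < L" using c1 by linarith
  have "\<exists>i j. i < j \<and> \<bar>c j - c i\<bar> < L"
  proof (cases "i < j")
    case True thus ?thesis using c1 by blast
  next
    case False hence "j < i" using ij0 by simp
    thus ?thesis using c2 by blast
  qed
  then obtain i j where ij: "i < j" "\<bar>c j - c i\<bar> < L" by blast
  define n where "n = j - i"
  define \<delta> where "\<delta> = c j - c i"
  have n1: "n \<ge> 1" using ij n_def by simp
  have sub: "{Inf J<..<Sup J} \<subseteq> J" by (rule Ioo_sub[OF RJ])
  define y where "y = (Inf J + Sup J) / 2 - \<delta> / 2"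
  have dl: "\<delta> < L" "- \<delta> < L" using ij(2) unfolding \<delta>_def by linarith+
  have "y \<in> {Inf J<..<Sup J}" "y + \<delta> \<in> {Inf J<..<Sup J}"
    using dl unfolding y_def L_def greaterThanLessThan_iff by (auto simp: field_simps)
  hence yJ: "y \<in> J" "y + \<delta> \<in> J" using sub by blast+
  have step: "(T ^^ n) ((T ^^ i) u) = u + c i + \<delta>" if "u \<in> J" for u
  proof -
    have "(T ^^ n) ((T ^^ i) u) = (T ^^ j) u" using ij(1) n_def
      by (metis funpow_add le_add_diff_inverse2 less_imp_le_nat o_apply)
    thus ?thesis using hc that \<delta>_def by simp
  qed
  have ind: "c (i + k * n) = c i + real k * \<delta>" for k
  proof (induction k)
    case 0 thus ?case by simp
  next
    case (Suc k)
    have e1: "i + Suc k * n = k * n + (n + i)" by simp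
    have "(T ^^ (i + Suc k * n)) y = (T ^^ (k * n)) ((T ^^ n) ((T ^^ i) y))"
      by (simp only: e1 funpow_add o_apply)
    also have "\<dots> = (T ^^ (k * n)) ((T ^^ i) (y + \<delta>))"
    proof -
      have "(T ^^ n) ((T ^^ i) y) = (T ^^ i) (y + \<delta>)"
        using step[OF yJ(1)] hc[OF yJ(2), of i] by linarith
      thus ?thesis by (rule arg_cong)
    qed
    also have "\<dots> = (T ^^ (i + k * n)) (y + \<delta>)"
      by (simp only: add.commute[of i] funpow_add o_apply)
    also have "\<dots> = y + \<delta> + c i + real k * \<delta>" using hc[OF yJ(2), of "i + k * n"] Suc.IH by linarith
    finally have fin: "(T ^^ (i + Suc k * n)) y = y + \<delta> + c i + real k * \<delta>" .
    have "real (Suc k) * \<delta> = real k * \<delta> + \<delta>" by (simp add: distrib_right)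
    thus ?case using fin hc[OF yJ(1), of "i + Suc k * n"] by linarith
  qed
  have d0: "\<delta> = 0"
  proof (rule ccontr)
    assume "\<delta> \<noteq> 0"
    hence ad: "\<bar>\<delta>\<bar> > 0" by simp
    obtain k :: nat where k: "real k > 4 * B / \<bar>\<delta>\<bar>" using reals_Archimedean2 by blast
    have "\<bar>real k * \<delta>\<bar> \<le> 4 * B" using cB[of "i + k * n"] cB[of i] ind[of k] by linarith
    moreover have "4 * B < real k * \<bar>\<delta>\<bar>" using k ad by (simp add: pos_divide_less_eq)
    moreover have "\<bar>real k * \<delta>\<bar> = real k * \<bar>\<delta>\<bar>" by (simp add: abs_mult)
    ultimately show False by linarith
  qed
  define I where "I = {Inf J + c i<..<Sup J + c i}"
  have Ipos: "Inf J + c i < Sup J + c i" using L L_def by simp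
  have "real_interval I" unfolding I_def real_interval_def using Ipos by auto
  moreover have "I \<subseteq> K"
  proof
    fix z assume "z \<in> I"
    hence "z - c i \<in> J" using sub unfolding I_def by auto
    hence "(T ^^ i) (z - c i) \<in> K" using TK JK by auto
    thus "z \<in> K" using hc[OF \<open>z - c i \<in> J\<close>] by simp
  qed
  moreover have "interval_length I > 0" unfolding interval_length_def I_def using Ipos by simp
  moreover have "\<forall>z\<in>I. (T ^^ n) z = z"
  proof
    fix z assume "z \<in> I"
    hence zJ: "z - c i \<in> J" using sub unfolding I_def by auto
    show "(T ^^ n) z = z" using step[OF zJ] hc[OF zJ] d0 by simp
  qed
  ultimately show ?thesis using n1 by (intro exI[of _ I] exI[of _ n]) simp
qed

end
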